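(* Let $n\ge1$, $k\ge2$, let $\nu$ be a distribution on $[k]$ with $\nu(i)>0$ for all $i$, and let $\Pi$ be a deterministic $k$-party protocol which solves unique set-disjointness under $\mathcal{D}_\nu$ with error at most $2\%$. Let $(W,X)$ be sampled as in the definition of $\mathcal{D}^0_\nu$ and define $$L=\frac1n\sum_{i\in[k]}\frac{1}{\nu(i)}\sum_{j\in[n]}I\big(X_i(j):\Pi(X)\,\big|\,W\big).$$ Then there is a $k$-party protocol $\Lambda$ for the $k$-bit AND function (player $i$ holds a bit $U_i$; the goal is to output $\prod_i U_i$), using public randomness $R$ and private randomness, such that: (1) on input $0^k$ and on input $1^k$, $\Lambda$ outputs the wrong value with probability at most $8\%$; and (2) $L=\sum_{i\in[k]} I\big(b:\Lambda(e_i[b],R)\,\big|\,R\big)$, where $b$ is a uniform bit independent of all randomness of $\Lambda$.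
   Context: Inputs are $X=(X_1,\ldots,X_k)\in(\{0,1\}^n)^k$, player $i$ holding $X_i$; $X^j=(X_1(j),\ldots,X_k(j))$, $|X^j|$ its Hamming weight; $\mathcal{F}_0=\{X:\forall j,|X^j|\le1\}$ and $\mathcal{F}_1=\{X:\exists j,|X^j|=k,\forall j'\neq j,|X^{j'}|\le1\}$, correct output $b$ on $\mathcal{F}_b$. Protocols are in the blackboard model; $\Pi(X)$ and $\Lambda(U,R)$ denote transcripts (whose output bit is determined by the transcript). $\mathcal{D}^0_\nu$: sample $W\in[k]^n$ with i.i.d. coordinates $\sim\nu$; for each $j$, if $W_j=i$ then $X_i(j)$ is a uniform bit and $X_{i'}(j)=0$ for $i'\ne i$. $\mathcal{D}^1_\nu$: sample $X\sim\mathcal{D}^0_\nu$ and uniform $j^*\in[n]$, set $X^{j^*}=1^k$. $\mathcal{D}_\nu$: uniform bit $b$, then $X\sim \mathcal{D}^b_\nu$; error is the probability the output differs from $b$. For $i\in[k]$ and a bit $b$, $e_i[b]\in\{0,1\}^k$ is the vector with $b$ in coordinate $i$ and $0$ elsewhere. *)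

theory Defs
  imports "HOL-Probability.Probability"
begin

text \<open>At an internal node
  Node i f t0 t1, player i writes the bit f applied to its local view
  (its input, possibly together with randomness) on the blackboard, and
  the protocol continues in t0 or t1 according to that bit.  A leaf carries
  the output bit, which is thus determined by the transcript.  Players are
  indexed by 0 ..< k.\<close>

datatype 'a proto = Leaf bool | Node nat "'a \<Rightarrow> bool" "'a proto" "'a proto"

fun speakers_ok :: "nat \<Rightarrow> 'a proto \<Rightarrow> bool" where
  "speakers_ok k (Leaf b) = True"
| "speakers_ok k (Node i f t0 t1) = (i < k \<and> speakers_ok k t0 \<and> speakers_ok k t1)"

fun transcript :: "'a proto \<Rightarrow> (nat \<Rightarrow> 'a) \<Rightarrow> bool list" where
  "transcript (Leaf b) v = []"
| "transcript (Node i f t0 t1) v =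
     (let c = f (v i) in c # transcript (if c then t1 else t0) v)"

fun pout :: "'a proto \<Rightarrow> (nat \<Rightarrow> 'a) \<Rightarrow> bool" where
  "pout (Leaf b) v = b"
| "pout (Node i f t0 t1) v = (if f (v i) then pout t1 v else pout t0 v)"

definition cond_mi :: "('a \<times> 'b \<times> 'c) pmf \<Rightarrow> real" where
  "cond_mi p =
     (\<Sum>(a,b,c)\<in>set_pmf p.
        pmf p (a,b,c) *
        log 2 (pmf p (a,b,c) * pmf (map_pmf (\<lambda>(x,y,z). z) p) c /
               (pmf (map_pmf (\<lambda>(x,y,z). (x,z)) p) (a,c) *
                pmf (map_pmf (\<lambda>(x,y,z). (y,z)) p) (b,c))))"

text \<open>Inputs: X i j is bit j of player i (players 0..<k, coordinates 0..<n);
  all other entries are False.  W j is in 0..<k for j < n.\<close>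

definition D0 :: "nat \<Rightarrow> nat \<Rightarrow> nat pmf \<Rightarrow> ((nat \<Rightarrow> nat) \<times> (nat \<Rightarrow> nat \<Rightarrow> bool)) pmf" where
  "D0 k n \<nu> = do {
     W \<leftarrow> Pi_pmf {..<n} 0 (\<lambda>_. \<nu>);
     B \<leftarrow> Pi_pmf {..<n} False (\<lambda>_. bernoulli_pmf (1/2));
     return_pmf (W, (\<lambda>i j. j < n \<and> W j = i \<and> B j))
   }"

definition D1 :: "nat \<Rightarrow> nat \<Rightarrow> nat pmf \<Rightarrow> (nat \<Rightarrow> nat \<Rightarrow> bool) pmf" where
  "D1 k n \<nu> = do {
     (W, X) \<leftarrow> D0 k n \<nu>;
     jstar \<leftarrow> pmf_of_set {..<n};
     return_pmf (\<lambda>i j. if j = jstar \<and> i < k then True else X i j)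
   }"

definition Dnu :: "nat \<Rightarrow> nat \<Rightarrow> nat pmf \<Rightarrow> (bool \<times> (nat \<Rightarrow> nat \<Rightarrow> bool)) pmf" where
  "Dnu k n \<nu> = do {
     b \<leftarrow> bernoulli_pmf (1/2);
     X \<leftarrow> (if b then D1 k n \<nu> else map_pmf snd (D0 k n \<nu>));
     return_pmf (b, X)
   }"

text \<open>Error of a deterministic protocol (player i's input is the row X i) under D_nu.\<close>
definition err_Dnu :: "nat \<Rightarrow> nat \<Rightarrow> nat pmf \<Rightarrow> (nat \<Rightarrow> bool) proto \<Rightarrow> real" where
  "err_Dnu k n \<nu> Pi_prot = measure_pmf.prob (Dnu k n \<nu>) {(b, X). pout Pi_prot X \<noteq> b}"

definition L_info :: "nat \<Rightarrow> nat \<Rightarrow> nat pmf \<Rightarrow> (nat \<Rightarrow> bool) proto \<Rightarrow> real" where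
  "L_info k n \<nu> Pi_prot =
     (1 / real n) * (\<Sum>i<k. (1 / pmf \<nu> i) *
        (\<Sum>j<n. cond_mi (map_pmf (\<lambda>(W, X). (X i j, transcript Pi_prot X, W)) (D0 k n \<nu>))))"

text \<open>Local view of player i in a randomized protocol for k-bit AND:
  (own input bit U i, public randomness R, own private randomness Rp i).
  Randomness values are encoded as natural numbers.\<close>

definition AND_view :: "(nat \<Rightarrow> bool) \<Rightarrow> nat \<Rightarrow> (nat \<Rightarrow> nat) \<Rightarrow> nat \<Rightarrow> bool \<times> nat \<times> nat" where
  "AND_view U R Rp = (\<lambda>i. (U i, R, Rp i))"

definition e_vec :: "nat \<Rightarrow> bool \<Rightarrow> nat \<Rightarrow> bool" where
  "e_vec i b = (\<lambda>i'. if i' = i then b else False)"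

definition rand_pmf :: "nat \<Rightarrow> nat pmf \<Rightarrow> (nat \<Rightarrow> nat pmf) \<Rightarrow> (nat \<times> (nat \<Rightarrow> nat)) pmf" where
  "rand_pmf k \<rho> \<sigma> = pair_pmf \<rho> (Pi_pmf {..<k} 0 \<sigma>)"

definition prob_out_true :: "nat \<Rightarrow> nat pmf \<Rightarrow> (nat \<Rightarrow> nat pmf) \<Rightarrow> (bool \<times> nat \<times> nat) proto
     \<Rightarrow> (nat \<Rightarrow> bool) \<Rightarrow> real" where
  "prob_out_true k \<rho> \<sigma> Lam U =
     measure_pmf.prob (rand_pmf k \<rho> \<sigma>) {(R, Rp). pout Lam (AND_view U R Rp)}"

definition AND_info :: "nat \<Rightarrow> nat pmf \<Rightarrow> (nat \<Rightarrow> nat pmf) \<Rightarrow> (bool \<times> nat \<times> nat) proto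
     \<Rightarrow> nat \<Rightarrow> real" where
  "AND_info k \<rho> \<sigma> Lam i =
     cond_mi (do {
       b \<leftarrow> bernoulli_pmf (1/2);
       (R, Rp) \<leftarrow> rand_pmf k \<rho> \<sigma>;
       return_pmf (b, transcript Lam (AND_view (e_vec i b) R Rp), R)
     })"

end

theory Submission
  imports Defs "HOL-Library.Countable"
begin


lemma E_fin:
  assumes "finite (set_pmf M)"
  shows "measure_pmf.expectation M f = (\<Sum>x\<in>set_pmf M. pmf M x * f x)"
  by (subst integral_measure_pmf[OF assms]) auto

lemma prob_as_E: "measure_pmf.prob M S = measure_pmf.expectation M (indicator S)"
  by simp

lemma pmf_mix:
  "pmf (bind_pmf q (\<lambda>c. map_pmf (\<lambda>x. (x,c)) (M c))) (x,c) = pmf q c * pmf (M c) x"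
proof -
  have "pmf (bind_pmf q (\<lambda>c. map_pmf (\<lambda>x. (x,c)) (M c))) (x,c)
      = (\<integral>c'. pmf (map_pmf (\<lambda>x. (x,c')) (M c')) (x,c) \<partial>q)" by (rule pmf_bind)
  also have "\<dots> = (\<integral>c'. indicator {c} c' * pmf (M c) x \<partial>q)"
  proof (rule Bochner_Integration.integral_cong[OF refl])
    fix c' show "pmf (map_pmf (\<lambda>x. (x,c')) (M c')) (x,c) = indicator {c} c' * pmf (M c) x"
    proof (cases "c' = c")
      case True
      have "inj (\<lambda>x. (x,c))" by (auto simp: inj_on_def)
      then show ?thesis using True pmf_map_inj'[of "\<lambda>x. (x,c)" "M c" x] by simp
    next
      case False
      then show ?thesis by (auto simp: pmf_eq_0_set_pmf)
    qed
  qed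
  also have "\<dots> = pmf q c * pmf (M c) x"
    by (simp add: measure_pmf_single)
  finally show ?thesis .
qed

definition mi_sum :: "('a \<times> 'b) pmf \<Rightarrow> real" where
  "mi_sum K = (\<Sum>(a,b)\<in>set_pmf K. pmf K (a,b) *
      log 2 (pmf K (a,b) / (pmf (map_pmf fst K) a * pmf (map_pmf snd K) b)))"

lemma cond_mi_mix:
  fixes q :: "'c pmf" and K :: "'c \<Rightarrow> ('a \<times> 'b) pmf"
  assumes fq: "finite (set_pmf q)" and fK: "\<And>c. c \<in> set_pmf q \<Longrightarrow> finite (set_pmf (K c))"
  shows "cond_mi (bind_pmf q (\<lambda>c. map_pmf (\<lambda>(a,b). (a,b,c)) (K c)))
       = (\<Sum>c\<in>set_pmf q. pmf q c * mi_sum (K c))"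
proof -
  define p where "p = bind_pmf q (\<lambda>c. map_pmf (\<lambda>(a,b). (a,b,c)) (K c))"
  have p_eq: "p = map_pmf (\<lambda>((a,b),c). (a,b,c)) (bind_pmf q (\<lambda>c. map_pmf (\<lambda>x. (x,c)) (K c)))"
    unfolding p_def by (simp add: map_bind_pmf pmf.map_comp o_def case_prod_unfold)
  have injf: "inj (\<lambda>((a::'a,b::'b),c::'c). (a,b,c))" by (auto simp: inj_on_def)
  have pm: "pmf p (a,b,c) = pmf q c * pmf (K c) (a,b)" for a b c
    using pmf_map_inj'[OF injf, of _ "((a,b),c)"] p_eq pmf_mix[of q K "(a,b)" c] by simp
  have pC: "map_pmf (\<lambda>(x,y,z). z) p = q"
    unfolding p_def by (simp add: map_bind_pmf pmf.map_comp o_def case_prod_beta map_pmf_const bind_return_pmf')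
  have pAC: "map_pmf (\<lambda>(x,y,z). (x,z)) p = bind_pmf q (\<lambda>c. map_pmf (\<lambda>x. (x,c)) (map_pmf fst (K c)))"
    unfolding p_def by (simp add: map_bind_pmf pmf.map_comp o_def case_prod_beta)
  have pBC: "map_pmf (\<lambda>(x,y,z). (y,z)) p = bind_pmf q (\<lambda>c. map_pmf (\<lambda>x. (x,c)) (map_pmf snd (K c)))"
    unfolding p_def by (simp add: map_bind_pmf pmf.map_comp o_def case_prod_beta)
  have setp: "set_pmf p = (\<lambda>(c,(a,b)). (a,b,c)) ` (SIGMA c:set_pmf q. set_pmf (K c))"
    unfolding p_def by (auto simp: image_iff) force
  have inj2: "inj_on (\<lambda>(c,(a::'a,b::'b)). (a,b,c)) (SIGMA c:set_pmf q. set_pmf (K c))"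
    by (auto simp: inj_on_def)
  have finS: "finite (SIGMA c:set_pmf q. set_pmf (K c))" using fq fK by auto
  have "cond_mi p = (\<Sum>(a,b,c)\<in>set_pmf p. pmf p (a,b,c) *
        log 2 (pmf p (a,b,c) * pmf q c /
               (pmf q c * pmf (map_pmf fst (K c)) a * (pmf q c * pmf (map_pmf snd (K c)) b))))"
    unfolding cond_mi_def pC pAC pBC pmf_mix by simp
  also have "\<dots> = (\<Sum>(c,(a,b))\<in>(SIGMA c:set_pmf q. set_pmf (K c)).
        pmf q c * pmf (K c) (a,b) *
        log 2 (pmf q c * pmf (K c) (a,b) * pmf q c /
               (pmf q c * pmf (map_pmf fst (K c)) a * (pmf q c * pmf (map_pmf snd (K c)) b))))"
    unfolding setp by (subst sum.reindex[OF inj2], rule sum.cong[OF refl], clarsimp simp: pm)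
  also have "\<dots> = (\<Sum>c\<in>set_pmf q. \<Sum>(a,b)\<in>set_pmf (K c).
        pmf q c * pmf (K c) (a,b) *
        log 2 (pmf q c * pmf (K c) (a,b) * pmf q c /
               (pmf q c * pmf (map_pmf fst (K c)) a * (pmf q c * pmf (map_pmf snd (K c)) b))))"
    by (subst sum.Sigma[symmetric]) (use fq fK in auto)
  also have "\<dots> = (\<Sum>c\<in>set_pmf q. pmf q c * mi_sum (K c))"
  proof (rule sum.cong[OF refl])
    fix c assume c: "c \<in> set_pmf q"
    have qc: "pmf q c \<noteq> 0" using c by (simp add: set_pmf_iff)
    show "(\<Sum>(a,b)\<in>set_pmf (K c).
        pmf q c * pmf (K c) (a,b) *
        log 2 (pmf q c * pmf (K c) (a,b) * pmf q c /
               (pmf q c * pmf (map_pmf fst (K c)) a * (pmf q c * pmf (map_pmf snd (K c)) b))))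
        = pmf q c * mi_sum (K c)"
      unfolding mi_sum_def sum_distrib_left
    proof (rule sum.cong[OF refl], clarify)
      fix a b
      have "pmf q c * pmf (K c) (a,b) * pmf q c /
               (pmf q c * pmf (map_pmf fst (K c)) a * (pmf q c * pmf (map_pmf snd (K c)) b))
            = pmf (K c) (a,b) / (pmf (map_pmf fst (K c)) a * pmf (map_pmf snd (K c)) b)"
        using qc by (simp add: field_simps)
      then show "pmf q c * pmf (K c) (a,b) *
        log 2 (pmf q c * pmf (K c) (a,b) * pmf q c /
               (pmf q c * pmf (map_pmf fst (K c)) a * (pmf q c * pmf (map_pmf snd (K c)) b)))
        = pmf q c * (pmf (K c) (a,b) * log 2 (pmf (K c) (a,b) / (pmf (map_pmf fst (K c)) a * pmf (map_pmf snd (K c)) b)))"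
        by simp
    qed
  qed
  finally show ?thesis unfolding p_def .
qed

lemma mi_sum_const: "mi_sum (map_pmf (\<lambda>x. (c, t x)) P) = 0"
proof -
  let ?K = "map_pmf (\<lambda>x. (c, t x)) P"
  have K: "?K = map_pmf (Pair c) (map_pmf t P)" by (simp add: pmf.map_comp o_def)
  have f: "map_pmf fst ?K = return_pmf c" by (simp add: pmf.map_comp o_def map_pmf_const)
  have s: "map_pmf snd ?K = map_pmf t P" by (simp add: pmf.map_comp o_def)
  have inj: "inj (Pair c)" by (auto simp: inj_on_def)
  show ?thesis unfolding mi_sum_def
  proof (rule sum.neutral, clarify)
    fix a b assume ab: "(a,b) \<in> set_pmf ?K"
    then have a: "a = c" by auto
    have "pmf ?K (a,b) = pmf (map_pmf t P) b" unfolding K a by (rule pmf_map_inj'[OF inj])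
    then show "pmf ?K (a,b) * log 2 (pmf ?K (a,b) / (pmf (map_pmf fst ?K) a * pmf (map_pmf snd ?K) b)) = 0"
      using ab unfolding f s a by (simp add: set_pmf_iff)
  qed
qed

definition PiB :: "nat \<Rightarrow> (nat \<Rightarrow> bool) pmf" where
  "PiB n = Pi_pmf {..<n} False (\<lambda>_. bernoulli_pmf (1/2))"

definition encR :: "nat \<Rightarrow> nat \<Rightarrow> (nat \<Rightarrow> nat) \<Rightarrow> nat" where
  "encR n j W = to_nat (j, map W [0..<n])"
definition encB :: "nat \<Rightarrow> (nat \<Rightarrow> bool) \<Rightarrow> nat" where
  "encB n B = to_nat (map B [0..<n])"
definition rowf :: "nat \<Rightarrow> nat \<Rightarrow> bool \<times> nat \<times> nat \<Rightarrow> nat \<Rightarrow> bool" where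
  "rowf n i v = (case v of (u, r, rp) \<Rightarrow> (\<lambda>j'. case (from_nat r :: nat \<times> nat list) of (j, gl) \<Rightarrow>
       if j' = j then u else (j' < n \<and> gl ! j' = i \<and> (from_nat rp :: bool list) ! j')))"

fun conv :: "nat \<Rightarrow> (nat \<Rightarrow> bool) proto \<Rightarrow> (bool \<times> nat \<times> nat) proto" where
  "conv n (Leaf b) = Leaf b"
| "conv n (Node i f t0 t1) = Node i (\<lambda>v. f (rowf n i v)) (conv n t0) (conv n t1)"

lemma transcript_conv: "transcript (conv n t) v = transcript t (\<lambda>i. rowf n i (v i))"
  by (induction t) (auto simp: Let_def)
lemma pout_conv: "pout (conv n t) v = pout t (\<lambda>i. rowf n i (v i))"
  by (induction t) auto
lemma speakers_conv: "speakers_ok k (conv n t) = speakers_ok k t"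
  by (induction t) auto
lemma pout_cong_k: "speakers_ok k t \<Longrightarrow> (\<And>i. i < k \<Longrightarrow> v i = v' i) \<Longrightarrow> pout t v = pout t v'"
  by (induction t) auto

definition emb :: "nat \<Rightarrow> nat \<Rightarrow> (nat \<Rightarrow> nat) \<Rightarrow> (nat \<Rightarrow> bool) \<Rightarrow> (nat \<Rightarrow> bool) \<Rightarrow> nat \<Rightarrow> nat \<Rightarrow> bool" where
  "emb n j g u B = (\<lambda>i j'. if j' = j then u i else (j' < n \<and> g j' = i \<and> B j'))"

lemma emb_upd_g: "emb n j (g(j := y)) u B = emb n j g u B"
  by (auto simp: emb_def fun_eq_iff)
lemma emb_upd_B: "emb n j g u (B(j := y)) = emb n j g u B"
  by (auto simp: emb_def fun_eq_iff)

lemma rows_emb: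
  assumes "\<forall>j'<n. W j' < k"
  shows "(\<lambda>i. rowf n i (U i, encR n j W, (\<lambda>i. if i < k then encB n (F i) else 0) i))
       = emb n j W U (\<lambda>j'. if j' < n then F (W j') j' else False)"
  using assms by (auto simp: fun_eq_iff rowf_def encR_def encB_def emb_def)

lemma prob_bern_half: "measure_pmf.prob (bernoulli_pmf (1/2)) {b} = 1/2"
  by (simp add: measure_pmf_single)

lemma Bc_dist:
  fixes g :: "nat \<Rightarrow> nat" and k :: nat
  assumes g: "\<forall>j'<n. g j' < k"
  shows "map_pmf (\<lambda>F j'. if j' < n then F (g j') j' else False) (Pi_pmf {..<k} d (\<lambda>_. PiB n)) = PiB n"
proof (rule pmf_eqI)
  fix x :: "nat \<Rightarrow> bool"
  let ?f = "\<lambda>F j'. if j' < n then F (g j') j' else False"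
  let ?P = "Pi_pmf {..<k} d (\<lambda>_. PiB n)"
  show "pmf (map_pmf ?f ?P) x = pmf (PiB n) x"
  proof (cases "\<exists>j'. j' \<notin> {..<n} \<and> x j' \<noteq> False")
    case True
    then have "?f -` {x} = {}" by (auto simp: fun_eq_iff)
    then have "pmf (map_pmf ?f ?P) x = 0" by (simp add: pmf_map)
    moreover have "pmf (PiB n) x = 0" unfolding PiB_def using True by (intro pmf_Pi_outside) auto
    ultimately show ?thesis by simp
  next
    case False
    then have xo: "\<And>j'. j' \<ge> n \<Longrightarrow> x j' = False" by (auto simp: not_less)
    have pre: "?f -` {x} = Pi {..<k} (\<lambda>i. Pi {..<n} (\<lambda>j'. if g j' = i then {x j'} else UNIV))"
      using g xo by (auto simp: fun_eq_iff Pi_def split: if_splits) (metis not_le)+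
    have "pmf (map_pmf ?f ?P) x = measure_pmf.prob ?P (?f -` {x})" by (simp add: pmf_map)
    also have "\<dots> = (\<Prod>i<k. measure_pmf.prob (PiB n) (Pi {..<n} (\<lambda>j'. if g j' = i then {x j'} else UNIV)))"
      unfolding pre by (rule measure_Pi_pmf_Pi) simp
    also have "\<dots> = (\<Prod>i<k. \<Prod>j'<n. (if g j' = i then 1/2 else 1))"
      unfolding PiB_def by (subst measure_Pi_pmf_Pi, simp) (auto intro!: prod.cong simp: prob_bern_half)
    also have "\<dots> = (\<Prod>j'<n. \<Prod>i<k. (if g j' = i then 1/2 else 1))"
      by (rule prod.swap)
    also have "\<dots> = (\<Prod>j'<n. (1/2::real))"
      using g by (intro prod.cong refl) (simp add: prod.delta)
    also have "\<dots> = pmf (PiB n) x"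
      unfolding PiB_def using xo by (subst pmf_Pi') (auto simp: not_less)
    finally show ?thesis .
  qed
qed

lemma sigma_prod:
  fixes k :: nat
  shows "Pi_pmf {..<k} 0 (\<lambda>_. map_pmf (encB n) (PiB n))
   = map_pmf (\<lambda>F i. if i < k then encB n (F i) else 0) (Pi_pmf {..<k} (\<lambda>_. False) (\<lambda>_. PiB n))"
proof -
  have "Pi_pmf {..<k} 0 (\<lambda>_. map_pmf (encB n) (PiB n))
      = map_pmf (\<lambda>f x. if x \<in> {..<k} then f x else 0) (Pi_pmf {..<k} (encB n (\<lambda>_. False)) (\<lambda>_. map_pmf (encB n) (PiB n)))"
    by (rule Pi_pmf_default_swap[symmetric]) simp
  also have "Pi_pmf {..<k} (encB n (\<lambda>_. False)) (\<lambda>_. map_pmf (encB n) (PiB n))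
      = map_pmf (\<lambda>h. encB n \<circ> h) (Pi_pmf {..<k} (\<lambda>_. False) (\<lambda>_. PiB n))"
    by (rule Pi_pmf_map) auto
  finally show ?thesis by (simp add: pmf.map_comp o_def)
qed

lemma rows_dist:
  fixes W :: "nat \<Rightarrow> nat" and k :: nat
  assumes W: "\<forall>j'<n. W j' < k"
  shows "map_pmf (\<lambda>Rp. (\<lambda>i. rowf n i (U i, encR n j W, Rp i))) (Pi_pmf {..<k} 0 (\<lambda>_. map_pmf (encB n) (PiB n)))
       = map_pmf (emb n j W U) (PiB n)"
proof -
  have "map_pmf (\<lambda>Rp. (\<lambda>i. rowf n i (U i, encR n j W, Rp i))) (Pi_pmf {..<k} 0 (\<lambda>_. map_pmf (encB n) (PiB n)))
     = map_pmf (\<lambda>F. emb n j W U (\<lambda>j'. if j' < n then F (W j') j' else False)) (Pi_pmf {..<k} (\<lambda>_. False) (\<lambda>_. PiB n))"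
    unfolding sigma_prod pmf.map_comp o_def using rows_emb[OF W] by simp
  also have "\<dots> = map_pmf (emb n j W U) (map_pmf (\<lambda>F j'. if j' < n then F (W j') j' else False) (Pi_pmf {..<k} (\<lambda>_. False) (\<lambda>_. PiB n)))"
    by (simp add: pmf.map_comp o_def)
  also have "\<dots> = map_pmf (emb n j W U) (PiB n)"
    using Bc_dist[OF W] by simp
  finally show ?thesis .
qed



definition PiW :: "nat \<Rightarrow> nat pmf \<Rightarrow> (nat \<Rightarrow> nat) pmf" where
  "PiW n \<nu> = Pi_pmf {..<n} 0 (\<lambda>_. \<nu>)"
definition PiA :: "nat \<Rightarrow> nat \<Rightarrow> (nat \<Rightarrow> bool) pmf" where
  "PiA n j = Pi_pmf ({..<n} - {j}) False (\<lambda>_. bernoulli_pmf (1/2))"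
definition Xf :: "nat \<Rightarrow> (nat \<Rightarrow> nat) \<Rightarrow> (nat \<Rightarrow> bool) \<Rightarrow> nat \<Rightarrow> nat \<Rightarrow> bool" where
  "Xf n W B = (\<lambda>i j. j < n \<and> W j = i \<and> B j)"

lemma fin_PiB: "finite (set_pmf (PiB n))"
  unfolding PiB_def by (subst set_Pi_pmf) (auto intro!: finite_PiE_dflt)
lemma fin_PiA: "finite (set_pmf (PiA n j))"
  unfolding PiA_def by (subst set_Pi_pmf) (auto intro!: finite_PiE_dflt)

lemma PiB_split:
  assumes "j < n"
  shows "PiB n = map_pmf (\<lambda>(y,B). B(j := y)) (pair_pmf (bernoulli_pmf (1/2)) (PiA n j))"
proof -
  have e: "{..<n} = insert j ({..<n} - {j})" using assms by auto
  show ?thesis unfolding PiB_def PiA_def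
    by (subst e, rule Pi_pmf_insert) auto
qed

lemma PiB_ignore:
  assumes "j < n" and "\<And>y B. f (B(j := y)) = f B"
  shows "map_pmf f (PiB n) = map_pmf f (PiA n j)"
proof -
  have "map_pmf f (PiB n) = map_pmf (f \<circ> snd) (pair_pmf (bernoulli_pmf (1/2)) (PiA n j))"
    unfolding PiB_split[OF assms(1)] pmf.map_comp by (intro map_pmf_cong) (auto simp: assms(2))
  also have "\<dots> = map_pmf f (PiA n j)"
    by (simp add: pmf.map_comp[symmetric] map_snd_pair_pmf)
  finally show ?thesis .
qed

definition Nf :: "nat \<Rightarrow> (nat \<Rightarrow> bool) proto \<Rightarrow> nat \<Rightarrow> nat \<Rightarrow> (nat \<Rightarrow> nat) \<Rightarrow> (bool \<times> bool list) pmf" where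
  "Nf n P i j W = map_pmf (\<lambda>(y,B). (y, transcript P (emb n j W (e_vec i y) B)))
      (pair_pmf (bernoulli_pmf (1/2)) (PiA n j))"

lemma Nf_upd: "Nf n P i j (W(j := y)) = Nf n P i j W"
  unfolding Nf_def emb_upd_g ..

lemma E_pair_prod:
  fixes f :: "'a \<Rightarrow> real" and g :: "'b \<Rightarrow> real"
  assumes fp: "finite (set_pmf p)" and fq: "finite (set_pmf q)"
  shows "measure_pmf.expectation (pair_pmf p q) (\<lambda>x. f (fst x) * g (snd x))
       = measure_pmf.expectation p f * measure_pmf.expectation q g"
proof -
  have "measure_pmf.expectation (pair_pmf p q) (\<lambda>x. f (fst x) * g (snd x))
      = (\<Sum>x\<in>set_pmf p \<times> set_pmf q. pmf p (fst x) * pmf q (snd x) * (f (fst x) * g (snd x)))"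
    using fp fq by (subst E_fin) (auto intro!: sum.cong simp: pmf_pair)
  also have "\<dots> = (\<Sum>a\<in>set_pmf p. \<Sum>b\<in>set_pmf q. (pmf p a * f a) * (pmf q b * g b))"
    unfolding sum.cartesian_product by (intro sum.cong refl) (auto simp: algebra_simps)
  also have "\<dots> = (\<Sum>a\<in>set_pmf p. pmf p a * f a) * (\<Sum>b\<in>set_pmf q. pmf q b * g b)"
    by (rule sum_product[symmetric])
  finally show ?thesis using fp fq by (simp add: E_fin)
qed

lemma map_pair_bind: "map_pmf f (pair_pmf A B) = bind_pmf A (\<lambda>a. map_pmf (\<lambda>b. f (a,b)) B)"
  unfolding pair_pmf_def by (simp add: map_bind_pmf map_pmf_def[symmetric] pmf.map_comp o_def)

definition rho :: "nat \<Rightarrow> nat pmf \<Rightarrow> nat pmf" where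
  "rho n \<nu> = map_pmf (\<lambda>(j,W). encR n j W) (pair_pmf (pmf_of_set {..<n}) (PiW n \<nu>))"
definition sig :: "nat \<Rightarrow> nat \<Rightarrow> nat pmf" where
  "sig n = (\<lambda>_. map_pmf (encB n) (PiB n))"

lemma fin_sigs: "finite (set_pmf (Pi_pmf {..<k} 0 (sig n)))"
  unfolding sig_def by (subst set_Pi_pmf) (auto intro!: finite_PiE_dflt simp: fin_PiB)

lemma AND_dist:
  "bind_pmf (bernoulli_pmf (1/2)) (\<lambda>b. bind_pmf (rand_pmf k \<rho> \<sigma>) (\<lambda>(R, Rp). return_pmf (b, T b R Rp, R)))
   = bind_pmf \<rho> (\<lambda>R. map_pmf (\<lambda>(a,b). (a,b,R))
        (bind_pmf (bernoulli_pmf (1/2)) (\<lambda>b. map_pmf (\<lambda>Rp. (b, T b R Rp)) (Pi_pmf {..<k} 0 \<sigma>))))"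
  unfolding rand_pmf_def pair_pmf_def
  by (simp add: bind_assoc_pmf bind_return_pmf map_bind_pmf map_pmf_def bind_commute_pmf[of "bernoulli_pmf (1/2)"])

lemma prob_bind_fin:
  assumes "finite (set_pmf p)" "\<And>x. x \<in> set_pmf p \<Longrightarrow> finite (set_pmf (f x))"
  shows "measure_pmf.prob (bind_pmf p f) A = measure_pmf.expectation p (\<lambda>x. measure_pmf.prob (f x) A)"
proof -
  have "measure_pmf.prob (bind_pmf p f) A = measure_pmf.expectation (bind_pmf p f) (indicator A)" by simp
  also have "\<dots> = (\<Sum>a\<in>set_pmf p. pmf p a *\<^sub>R measure_pmf.expectation (f a) (indicator A))"
    by (rule pmf_expectation_bind) (use assms in auto)
  also have "\<dots> = measure_pmf.expectation p (\<lambda>x. measure_pmf.prob (f x) A)"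
    using assms(1) by (simp add: E_fin)
  finally show ?thesis .
qed

lemma emb_split_prob:
  assumes j: "j < n"
  shows "measure_pmf.prob (PiB n) {B. Q (emb n j W u B)} = measure_pmf.prob (PiA n j) {B. Q (emb n j W u B)}"
proof -
  have "measure_pmf.prob (PiB n) {B. Q (emb n j W u B)} = measure_pmf.prob (map_pmf (emb n j W u) (PiB n)) {X. Q X}"
    by (simp add: measure_map_pmf vimage_def)
  also have "map_pmf (emb n j W u) (PiB n) = map_pmf (emb n j W u) (PiA n j)"
    by (rule PiB_ignore[OF j]) (simp add: emb_upd_B)
  finally show ?thesis by (simp add: measure_map_pmf vimage_def)
qed

lemma Xf_half:
  assumes j: "j < n"
  shows "measure_pmf.prob (PiB n) {B. Q (emb n j W (\<lambda>_. False) B)} \<le> 2 * measure_pmf.prob (PiB n) {B. Q (Xf n W B)}"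
proof -
  have "measure_pmf.prob (PiB n) {B. Q (Xf n W B)}
      = measure_pmf.prob (bind_pmf (bernoulli_pmf (1/2)) (\<lambda>y. map_pmf (\<lambda>B. B(j := y)) (PiA n j))) {B. Q (Xf n W B)}"
    unfolding PiB_split[OF j] map_pair_bind by simp
  also have "\<dots> = measure_pmf.expectation (bernoulli_pmf (1/2)) (\<lambda>y. measure_pmf.prob (PiA n j) {B. Q (Xf n W (B(j := y)))})"
    by (subst prob_bind_fin) (auto simp: fin_PiA measure_map_pmf vimage_def)
  also have "\<dots> = measure_pmf.prob (PiA n j) {B. Q (Xf n W (B(j := True)))} / 2
       + measure_pmf.prob (PiA n j) {B. Q (Xf n W (B(j := False)))} / 2"
    by simp
  finally have e0: "measure_pmf.prob (PiB n) {B. Q (Xf n W B)} = measure_pmf.prob (PiA n j) {B. Q (Xf n W (B(j := True)))} / 2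
       + measure_pmf.prob (PiA n j) {B. Q (Xf n W (B(j := False)))} / 2" .
  have xe: "\<And>B y. Xf n W (B(j := y)) = emb n j W (\<lambda>i. W j = i \<and> y) B"
    using j by (auto simp: fun_eq_iff Xf_def emb_def)
  have e: "measure_pmf.prob (PiB n) {B. Q (Xf n W B)} =
       measure_pmf.prob (PiA n j) {B. Q (emb n j W (\<lambda>i. W j = i) B)} / 2 +
       measure_pmf.prob (PiA n j) {B. Q (emb n j W (\<lambda>_. False) B)} / 2" unfolding e0 xe by simp
  show ?thesis unfolding e emb_split_prob[OF j] by simp
qed

context
  fixes n k :: nat and \<nu> :: "nat pmf"
  assumes s\<nu>: "set_pmf \<nu> \<subseteq> {..<k}"
begin

lemma fin_PiW: "finite (set_pmf (PiW n \<nu>))"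
  unfolding PiW_def using s\<nu> by (subst set_Pi_pmf) (auto intro!: finite_PiE_dflt intro: finite_subset)

lemma PiW_range: "W \<in> set_pmf (PiW n \<nu>) \<Longrightarrow> \<forall>j'<n. W j' < k"
  unfolding PiW_def using s\<nu> by (subst (asm) set_Pi_pmf) (auto simp: PiE_dflt_def)

lemma D0_map:
  "map_pmf (\<lambda>(W,X). (X i j, transcript P X, W)) (D0 k n \<nu>)
   = bind_pmf (PiW n \<nu>) (\<lambda>W. map_pmf (\<lambda>(a,b). (a,b,W))
        (map_pmf (\<lambda>B. (Xf n W B i j, transcript P (Xf n W B))) (PiB n)))"
  unfolding D0_def PiW_def PiB_def Xf_def
  by (simp add: map_bind_pmf pmf.map_comp o_def map_pmf_def[symmetric])

lemma K_eq:
  assumes "j < n" "W j = i"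
  shows "map_pmf (\<lambda>B. (Xf n W B i j, transcript P (Xf n W B))) (PiB n) = Nf n P i j W"
proof -
  have h1: "\<And>y B. Xf n W (B(j := y)) = emb n j W (e_vec i y) B"
    using assms by (auto simp: fun_eq_iff Xf_def emb_def e_vec_def)
  have h2: "\<And>y B. Xf n W (B(j := y)) i j = y" using assms by (simp add: Xf_def)
  show ?thesis unfolding PiB_split[OF assms(1)] Nf_def pmf.map_comp
    by (intro map_pmf_cong refl) (auto simp: h1 h2 emb_def e_vec_def simp del: fun_upd_apply)
qed

lemma K_neq:
  assumes "W j \<noteq> i"
  shows "mi_sum (map_pmf (\<lambda>B. (Xf n W B i j, transcript P (Xf n W B))) (PiB n)) = 0"
proof -
  have "map_pmf (\<lambda>B. (Xf n W B i j, transcript P (Xf n W B))) (PiB n)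
      = map_pmf (\<lambda>B. (False, transcript P (Xf n W B))) (PiB n)"
    using assms by (simp add: Xf_def)
  then show ?thesis by (simp add: mi_sum_const)
qed

lemma PiW_split:
  assumes "j < n"
  shows "PiW n \<nu> = map_pmf (\<lambda>(y,f). f(j := y)) (pair_pmf \<nu> (Pi_pmf ({..<n} - {j}) 0 (\<lambda>_. \<nu>)))"
proof -
  have e: "{..<n} = insert j ({..<n} - {j})" using assms by auto
  show ?thesis unfolding PiW_def
    by (subst e, rule Pi_pmf_insert) auto
qed

lemma Lside:
  assumes j: "j < n"
  shows "cond_mi (map_pmf (\<lambda>(W,X). (X i j, transcript P X, W)) (D0 k n \<nu>))
       = pmf \<nu> i * measure_pmf.expectation (PiW n \<nu>) (\<lambda>W. mi_sum (Nf n P i j W))"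
proof -
  let ?h = "\<lambda>W. mi_sum (Nf n P i j W)"
  let ?Q = "Pi_pmf ({..<n} - {j}) 0 (\<lambda>_. \<nu>)"
  have finQ: "finite (set_pmf ?Q)"
    using s\<nu> by (subst set_Pi_pmf) (auto intro!: finite_PiE_dflt intro: finite_subset)
  have fin\<nu>: "finite (set_pmf \<nu>)" using s\<nu> finite_subset by blast
  have "cond_mi (map_pmf (\<lambda>(W,X). (X i j, transcript P X, W)) (D0 k n \<nu>))
     = (\<Sum>W\<in>set_pmf (PiW n \<nu>). pmf (PiW n \<nu>) W *
          mi_sum (map_pmf (\<lambda>B. (Xf n W B i j, transcript P (Xf n W B))) (PiB n)))"
    unfolding D0_map by (rule cond_mi_mix) (auto simp: fin_PiW fin_PiB)
  also have "\<dots> = (\<Sum>W\<in>set_pmf (PiW n \<nu>). pmf (PiW n \<nu>) W * (if W j = i then ?h W else 0))"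
    by (intro sum.cong refl) (auto simp: K_eq[OF j] K_neq)
  also have "\<dots> = measure_pmf.expectation (PiW n \<nu>) (\<lambda>W. if W j = i then ?h W else 0)"
    by (simp add: E_fin fin_PiW)
  also have "\<dots> = measure_pmf.expectation (pair_pmf \<nu> ?Q) (\<lambda>x. (if fst x = i then 1 else 0) * ?h ((snd x)(j := i)))"
    unfolding PiW_split[OF j] integral_map_pmf
    by (intro Bochner_Integration.integral_cong refl) (auto simp: Nf_upd)
  also have "\<dots> = measure_pmf.expectation \<nu> (\<lambda>y. if y = i then 1 else 0) * measure_pmf.expectation ?Q (\<lambda>f. ?h (f(j := i)))"
    by (rule E_pair_prod[OF fin\<nu> finQ])
  also have "measure_pmf.expectation \<nu> (\<lambda>y. if y = i then 1 else 0) = pmf \<nu> i"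
  proof -
    have "measure_pmf.expectation \<nu> (\<lambda>y. if y = i then 1 else 0) = (\<Sum>y\<in>set_pmf \<nu>. if y = i then pmf \<nu> y else 0)"
      using fin\<nu> by (simp add: E_fin if_distrib cong: if_cong)
    also have "\<dots> = pmf \<nu> i" by (simp add: sum.delta[OF fin\<nu>] set_pmf_iff)
    finally show ?thesis .
  qed
  also have "measure_pmf.expectation ?Q (\<lambda>f. ?h (f(j := i))) = measure_pmf.expectation (PiW n \<nu>) ?h"
  proof -
    have "measure_pmf.expectation (PiW n \<nu>) ?h = measure_pmf.expectation (pair_pmf \<nu> ?Q) (\<lambda>x. ?h ((snd x)(j := i)))"
      unfolding PiW_split[OF j] integral_map_pmf
      by (intro Bochner_Integration.integral_cong refl) (auto simp: Nf_upd)
    also have "\<dots> = measure_pmf.expectation ?Q (\<lambda>f. ?h (f(j := i)))"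
      by (rule expectation_pair_pmf_snd)
    finally show ?thesis by simp
  qed
  finally show ?thesis .
qed

lemma M_eq:
  assumes j: "j < n" and W: "W \<in> set_pmf (PiW n \<nu>)"
  shows "bind_pmf (bernoulli_pmf (1/2)) (\<lambda>b. map_pmf (\<lambda>Rp. (b, transcript (conv n P) (AND_view (e_vec i b) (encR n j W) Rp)))
            (Pi_pmf {..<k} 0 (sig n))) = Nf n P i j W"
proof -
  have r: "\<forall>j'<n. W j' < k" by (rule PiW_range[OF W])
  have "\<And>b. map_pmf (\<lambda>Rp. (b, transcript (conv n P) (AND_view (e_vec i b) (encR n j W) Rp))) (Pi_pmf {..<k} 0 (sig n))
      = map_pmf (\<lambda>X. (b, transcript P X)) (map_pmf (\<lambda>Rp. (\<lambda>i'. rowf n i' (e_vec i b i', encR n j W, Rp i'))) (Pi_pmf {..<k} 0 (sig n)))"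
    by (simp add: pmf.map_comp o_def transcript_conv AND_view_def)
  also have "\<And>b. map_pmf (\<lambda>X. (b, transcript P X)) (map_pmf (\<lambda>Rp. (\<lambda>i'. rowf n i' (e_vec i b i', encR n j W, Rp i'))) (Pi_pmf {..<k} 0 (sig n)))
      = map_pmf (\<lambda>B. (b, transcript P (emb n j W (e_vec i b) B))) (PiB n)"
    unfolding sig_def rows_dist[OF r] by (simp add: pmf.map_comp o_def)
  also have "\<And>b. map_pmf (\<lambda>B. (b, transcript P (emb n j W (e_vec i b) B))) (PiB n)
      = map_pmf (\<lambda>B. (b, transcript P (emb n j W (e_vec i b) B))) (PiA n j)"
    by (rule PiB_ignore[OF j]) (simp add: emb_upd_B)
  finally show ?thesis unfolding Nf_def map_pair_bind by simp
qed

lemma Rside: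
  assumes n: "n \<ge> 1"
  shows "AND_info k (rho n \<nu>) (sig n) (conv n P) i
       = (\<Sum>j<n. measure_pmf.expectation (PiW n \<nu>) (\<lambda>W. mi_sum (Nf n P i j W))) / n"
proof -
  let ?M = "\<lambda>R. bind_pmf (bernoulli_pmf (1/2)) (\<lambda>b. map_pmf (\<lambda>Rp. (b, transcript (conv n P) (AND_view (e_vec i b) R Rp)))
            (Pi_pmf {..<k} 0 (sig n)))"
  let ?Z = "pair_pmf (pmf_of_set {..<n}) (PiW n \<nu>)"
  have ne: "{..<n} \<noteq> {}" using n by (auto simp: lessThan_empty_iff)
  have finZ: "finite (set_pmf ?Z)" using ne by (simp add: fin_PiW)
  have finrho: "finite (set_pmf (rho n \<nu>))" unfolding rho_def using finZ by simp
  have finM: "finite (set_pmf (?M R))" for R using fin_sigs by simp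
  have "AND_info k (rho n \<nu>) (sig n) (conv n P) i = (\<Sum>R\<in>set_pmf (rho n \<nu>). pmf (rho n \<nu>) R * mi_sum (?M R))"
    unfolding AND_info_def AND_dist by (rule cond_mi_mix[OF finrho finM])
  also have "\<dots> = measure_pmf.expectation (rho n \<nu>) (\<lambda>R. mi_sum (?M R))"
    by (simp add: E_fin finrho)
  also have "\<dots> = measure_pmf.expectation ?Z (\<lambda>x. mi_sum (?M (encR n (fst x) (snd x))))"
    unfolding rho_def integral_map_pmf by (simp add: case_prod_beta)
  also have "\<dots> = measure_pmf.expectation ?Z (\<lambda>x. mi_sum (Nf n P i (fst x) (snd x)))"
    using finZ by (simp add: E_fin) (intro sum.cong refl, auto simp: M_eq ne)
  also have "?Z = bind_pmf (pmf_of_set {..<n}) (\<lambda>j. map_pmf (Pair j) (PiW n \<nu>))"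
    by (simp add: map_pair_bind[of "\<lambda>x. x", simplified])
  also have "measure_pmf.expectation \<dots> (\<lambda>x. mi_sum (Nf n P i (fst x) (snd x)))
       = (\<Sum>j<n. measure_pmf.expectation (map_pmf (Pair j) (PiW n \<nu>)) (\<lambda>x. mi_sum (Nf n P i (fst x) (snd x))) / real (card {..<n}))"
    by (subst pmf_expectation_bind_pmf_of_set) (auto simp: ne fin_PiW field_simps)
  also have "\<dots> = (\<Sum>j<n. measure_pmf.expectation (PiW n \<nu>) (\<lambda>W. mi_sum (Nf n P i j W))) / n"
    by (simp add: integral_map_pmf sum_divide_distrib)
  finally show ?thesis .
qed

lemma EZ:
  assumes n: "n \<ge> 1"
  shows "measure_pmf.expectation (pair_pmf (pmf_of_set {..<n}) (PiW n \<nu>)) (\<lambda>x. g (fst x) (snd x))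
       = (\<Sum>j<n. measure_pmf.expectation (PiW n \<nu>) (g j)) / n"
proof -
  have ne: "{..<n} \<noteq> {}" using n by (auto simp: lessThan_empty_iff)
  have "pair_pmf (pmf_of_set {..<n}) (PiW n \<nu>) = bind_pmf (pmf_of_set {..<n}) (\<lambda>j. map_pmf (Pair j) (PiW n \<nu>))"
    by (simp add: map_pair_bind[of "\<lambda>x. x", simplified])
  then show ?thesis
    by (simp, subst pmf_expectation_bind_pmf_of_set) (auto simp: ne fin_PiW field_simps integral_map_pmf sum_divide_distrib)
qed

lemma pot_eq:
  assumes n: "n \<ge> 1"
  shows "prob_out_true k (rho n \<nu>) (sig n) (conv n P) U
       = (\<Sum>j<n. measure_pmf.expectation (PiW n \<nu>) (\<lambda>W. measure_pmf.prob (PiB n) {B. pout P (emb n j W U B)})) / n"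
proof -
  let ?S = "Pi_pmf {..<k} 0 (sig n)"
  let ?Z = "pair_pmf (pmf_of_set {..<n}) (PiW n \<nu>)"
  have ne: "{..<n} \<noteq> {}" using n by (auto simp: lessThan_empty_iff)
  have finZ: "finite (set_pmf ?Z)" using ne by (simp add: fin_PiW)
  have finrho: "finite (set_pmf (rho n \<nu>))" unfolding rho_def using finZ by simp
  have "prob_out_true k (rho n \<nu>) (sig n) (conv n P) U
     = measure_pmf.prob (bind_pmf (rho n \<nu>) (\<lambda>R. map_pmf (Pair R) ?S)) {(R, Rp). pout (conv n P) (AND_view U R Rp)}"
    unfolding prob_out_true_def rand_pmf_def by (simp add: map_pair_bind[of "\<lambda>x. x", simplified])
  also have "\<dots> = measure_pmf.expectation (rho n \<nu>) (\<lambda>R. measure_pmf.prob ?S {Rp. pout (conv n P) (AND_view U R Rp)})"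
    by (subst prob_bind_fin) (auto simp: finrho fin_sigs measure_map_pmf vimage_def)
  also have "\<dots> = measure_pmf.expectation ?Z (\<lambda>x. measure_pmf.prob ?S {Rp. pout (conv n P) (AND_view U (encR n (fst x) (snd x)) Rp)})"
    unfolding rho_def integral_map_pmf by (simp add: case_prod_beta)
  also have "\<dots> = measure_pmf.expectation ?Z (\<lambda>x. measure_pmf.prob (PiB n) {B. pout P (emb n (fst x) (snd x) U B)})"
  proof -
    have "measure_pmf.prob ?S {Rp. pout (conv n P) (AND_view U (encR n j W) Rp)} = measure_pmf.prob (PiB n) {B. pout P (emb n j W U B)}"
      if W: "W \<in> set_pmf (PiW n \<nu>)" for j W
    proof -
      have "measure_pmf.prob ?S {Rp. pout (conv n P) (AND_view U (encR n j W) Rp)}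
          = measure_pmf.prob (map_pmf (\<lambda>Rp. (\<lambda>i. rowf n i (U i, encR n j W, Rp i))) ?S) {X. pout P X}"
        by (simp add: measure_map_pmf vimage_def pout_conv AND_view_def)
      also have "\<dots> = measure_pmf.prob (map_pmf (emb n j W U) (PiB n)) {X. pout P X}"
        unfolding sig_def rows_dist[OF PiW_range[OF W]] ..
      finally show ?thesis by (simp add: measure_map_pmf vimage_def)
    qed
    then show ?thesis using finZ by (simp add: E_fin) (intro sum.cong refl, auto)
  qed
  also have "\<dots> = (\<Sum>j<n. measure_pmf.expectation (PiW n \<nu>) (\<lambda>W. measure_pmf.prob (PiB n) {B. pout P (emb n j W U B)})) / n"
    by (rule EZ[OF n])
  finally show ?thesis .
qed

lemma fin_D0: "finite (set_pmf (D0 k n \<nu>))"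
  using fin_PiW fin_PiB unfolding D0_def PiW_def PiB_def by auto

lemma fin_D1: "n \<ge> 1 \<Longrightarrow> finite (set_pmf (D1 k n \<nu>))"
  using fin_D0 unfolding D1_def by (auto simp: lessThan_empty_iff)

lemma a0_eq:
  "measure_pmf.prob (map_pmf snd (D0 k n \<nu>)) {X. pout P X}
   = measure_pmf.expectation (PiW n \<nu>) (\<lambda>W. measure_pmf.prob (PiB n) {B. pout P (Xf n W B)})"
proof -
  have "map_pmf snd (D0 k n \<nu>) = bind_pmf (PiW n \<nu>) (\<lambda>W. map_pmf (Xf n W) (PiB n))"
    unfolding D0_def PiW_def PiB_def Xf_def by (simp add: map_bind_pmf map_pmf_def[symmetric] pmf.map_comp o_def)
  then show ?thesis
    by (simp, subst prob_bind_fin) (auto simp: fin_PiW fin_PiB measure_map_pmf vimage_def)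
qed

definition Yf :: "nat \<Rightarrow> (nat \<Rightarrow> nat) \<Rightarrow> (nat \<Rightarrow> bool) \<Rightarrow> nat \<Rightarrow> nat \<Rightarrow> bool" where
  "Yf j W B = (\<lambda>i j'. if j' = j \<and> i < k then True else Xf n W B i j')"

lemma D1_eq:
  "D1 k n \<nu> = bind_pmf (pair_pmf (pmf_of_set {..<n}) (PiW n \<nu>)) (\<lambda>x. map_pmf (Yf (fst x) (snd x)) (PiB n))"
proof -
  have "D1 k n \<nu> = bind_pmf (PiW n \<nu>) (\<lambda>W. bind_pmf (PiB n) (\<lambda>B. bind_pmf (pmf_of_set {..<n}) (\<lambda>j. return_pmf (Yf j W B))))"
    unfolding D1_def D0_def PiW_def PiB_def Yf_def Xf_def by (simp add: bind_assoc_pmf bind_return_pmf)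
  also have "\<dots> = bind_pmf (PiW n \<nu>) (\<lambda>W. bind_pmf (pmf_of_set {..<n}) (\<lambda>j. bind_pmf (PiB n) (\<lambda>B. return_pmf (Yf j W B))))"
    by (subst bind_commute_pmf[of "PiB n"]) (rule refl)
  also have "\<dots> = bind_pmf (pmf_of_set {..<n}) (\<lambda>j. bind_pmf (PiW n \<nu>) (\<lambda>W. bind_pmf (PiB n) (\<lambda>B. return_pmf (Yf j W B))))"
    by (rule bind_commute_pmf)
  also have "\<dots> = bind_pmf (pair_pmf (pmf_of_set {..<n}) (PiW n \<nu>)) (\<lambda>x. map_pmf (Yf (fst x) (snd x)) (PiB n))"
    by (simp add: map_pair_bind[of "\<lambda>x. x", simplified] bind_map_pmf map_pmf_def bind_assoc_pmf bind_return_pmf)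
  finally show ?thesis .
qed

lemma D1_prob:
  assumes n: "n \<ge> 1" and sp: "speakers_ok k P"
  shows "measure_pmf.prob (D1 k n \<nu>) {X. pout P X}
       = (\<Sum>j<n. measure_pmf.expectation (PiW n \<nu>) (\<lambda>W. measure_pmf.prob (PiB n) {B. pout P (emb n j W (\<lambda>_. True) B)})) / n"
proof -
  let ?Z = "pair_pmf (pmf_of_set {..<n}) (PiW n \<nu>)"
  have ne: "{..<n} \<noteq> {}" using n by (auto simp: lessThan_empty_iff)
  have finZ: "finite (set_pmf ?Z)" using ne by (simp add: fin_PiW)
  have pe: "pout P (Yf j W B) = pout P (emb n j W (\<lambda>_. True) B)" for j W B
    by (rule pout_cong_k[OF sp]) (auto simp: Yf_def emb_def Xf_def fun_eq_iff)
  have "measure_pmf.prob (D1 k n \<nu>) {X. pout P X}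
      = measure_pmf.expectation ?Z (\<lambda>x. measure_pmf.prob (PiB n) {B. pout P (emb n (fst x) (snd x) (\<lambda>_. True) B)})"
    unfolding D1_eq by (subst prob_bind_fin) (auto simp: ne fin_PiW fin_PiB measure_map_pmf vimage_def pe)
  also have "\<dots> = (\<Sum>j<n. measure_pmf.expectation (PiW n \<nu>) (\<lambda>W. measure_pmf.prob (PiB n) {B. pout P (emb n j W (\<lambda>_. True) B)})) / n"
    by (rule EZ[OF n])
  finally show ?thesis .
qed

lemma err_eq:
  assumes n: "n \<ge> 1"
  shows "err_Dnu k n \<nu> P = (1 - measure_pmf.prob (D1 k n \<nu>) {X. pout P X}) / 2
        + measure_pmf.prob (map_pmf snd (D0 k n \<nu>)) {X. pout P X} / 2"
proof -
  have "err_Dnu k n \<nu> P = measure_pmf.expectation (bernoulli_pmf (1/2))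
     (\<lambda>b. measure_pmf.prob (bind_pmf (if b then D1 k n \<nu> else map_pmf snd (D0 k n \<nu>)) (\<lambda>X. return_pmf (b, X)))
           {(b, X). pout P X \<noteq> b})"
    unfolding err_Dnu_def Dnu_def
    by (subst prob_bind_fin) (auto simp: fin_D0 fin_D1[OF n] set_bind_pmf)
  also have "\<dots> = measure_pmf.prob (D1 k n \<nu>) {X. \<not> pout P X} / 2
        + measure_pmf.prob (map_pmf snd (D0 k n \<nu>)) {X. pout P X} / 2"
    by (simp add: bind_return_pmf' map_pmf_def[symmetric] measure_map_pmf vimage_def)
  also have "{X. \<not> pout P X} = space (measure_pmf (D1 k n \<nu>)) - {X. pout P X}" by auto
  also have "measure_pmf.prob (D1 k n \<nu>) \<dots> = 1 - measure_pmf.prob (D1 k n \<nu>) {X. pout P X}"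
    by (rule measure_pmf.prob_compl) simp
  finally show ?thesis .
qed

end



theorem mainTheorem5:
  fixes n k :: nat and \<nu> :: "nat pmf" and Pi_prot :: "(nat \<Rightarrow> bool) proto"
  assumes "n \<ge> 1" and "k \<ge> 2"
    and "set_pmf \<nu> \<subseteq> {..<k}" and "\<forall>i<k. pmf \<nu> i > 0"
    and "speakers_ok k Pi_prot"
    and "err_Dnu k n \<nu> Pi_prot \<le> 2 / 100"
  shows "\<exists>(Lam :: (bool \<times> nat \<times> nat) proto) (\<rho> :: nat pmf) (\<sigma> :: nat \<Rightarrow> nat pmf).
           speakers_ok k Lam \<and> finite (set_pmf \<rho>) \<and> (\<forall>i<k. finite (set_pmf (\<sigma> i))) \<and>
           prob_out_true k \<rho> \<sigma> Lam (\<lambda>_. False) \<le> 8 / 100 \<and>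
           1 - prob_out_true k \<rho> \<sigma> Lam (\<lambda>_. True) \<le> 8 / 100 \<and>
           L_info k n \<nu> Pi_prot = (\<Sum>i<k. AND_info k \<rho> \<sigma> Lam i)"
proof -
  note n = assms(1) and s\<nu> = assms(3) and pos = assms(4) and sp = assms(5) and er = assms(6)
  define a0 where "a0 = measure_pmf.prob (map_pmf snd (D0 k n \<nu>)) {X. pout Pi_prot X}"
  define p1 where "p1 = measure_pmf.prob (D1 k n \<nu>) {X. pout Pi_prot X}"
  have err: "err_Dnu k n \<nu> Pi_prot = (1 - p1) / 2 + a0 / 2"
    unfolding a0_def p1_def by (rule err_eq[OF s\<nu> n])
  have a0nn: "a0 \<ge> 0" and p1le: "p1 \<le> 1" unfolding a0_def p1_def by auto
  have ne: "{..<n} \<noteq> {}" using n by (auto simp: lessThan_empty_iff)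
  have finrho: "finite (set_pmf (rho n \<nu>))" unfolding rho_def using ne fin_PiW[OF s\<nu>] by simp
  have finsig: "\<forall>i<k. finite (set_pmf (sig n i))" unfolding sig_def using fin_PiB by simp
  have c1: "prob_out_true k (rho n \<nu>) (sig n) (conv n Pi_prot) (\<lambda>_. False) \<le> 8 / 100"
  proof -
    have each: "measure_pmf.expectation (PiW n \<nu>) (\<lambda>W. measure_pmf.prob (PiB n) {B. pout Pi_prot (emb n j W (\<lambda>_. False) B)})
        \<le> 2 * a0" if j: "j < n" for j
    proof -
      have "measure_pmf.expectation (PiW n \<nu>) (\<lambda>W. measure_pmf.prob (PiB n) {B. pout Pi_prot (emb n j W (\<lambda>_. False) B)})
          \<le> measure_pmf.expectation (PiW n \<nu>) (\<lambda>W. 2 * measure_pmf.prob (PiB n) {B. pout Pi_prot (Xf n W B)})"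
        by (intro integral_mono integrable_measure_pmf_finite fin_PiW[OF s\<nu>] Xf_half[OF j])
      also have "\<dots> = 2 * a0" unfolding a0_def a0_eq[OF s\<nu>] by simp
      finally show ?thesis .
    qed
    have "prob_out_true k (rho n \<nu>) (sig n) (conv n Pi_prot) (\<lambda>_. False)
       = (\<Sum>j<n. measure_pmf.expectation (PiW n \<nu>) (\<lambda>W. measure_pmf.prob (PiB n) {B. pout Pi_prot (emb n j W (\<lambda>_. False) B)})) / n"
      by (rule pot_eq[OF s\<nu> n])
    also have "\<dots> \<le> (\<Sum>j<n. 2 * a0) / n"
      by (intro divide_right_mono sum_mono each) auto
    also have "\<dots> = 2 * a0" using n by simp
    also have "\<dots> \<le> 8 / 100" using er p1le unfolding err by (simp add: field_simps)
    finally show ?thesis .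
  qed
  have c2: "1 - prob_out_true k (rho n \<nu>) (sig n) (conv n Pi_prot) (\<lambda>_. True) \<le> 8 / 100"
  proof -
    have "prob_out_true k (rho n \<nu>) (sig n) (conv n Pi_prot) (\<lambda>_. True) = p1"
      unfolding p1_def pot_eq[OF s\<nu> n] D1_prob[OF s\<nu> n sp] ..
    then show ?thesis using er a0nn unfolding err by (simp add: field_simps)
  qed
  have info: "L_info k n \<nu> Pi_prot = (\<Sum>i<k. AND_info k (rho n \<nu>) (sig n) (conv n Pi_prot) i)"
  proof -
    have "L_info k n \<nu> Pi_prot = (1 / real n) * (\<Sum>i<k. (1 / pmf \<nu> i) *
        (\<Sum>j<n. pmf \<nu> i * measure_pmf.expectation (PiW n \<nu>) (\<lambda>W. mi_sum (Nf n Pi_prot i j W))))"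
      unfolding L_info_def by (intro arg_cong2[where f="(*)"] refl sum.cong) (auto simp: Lside[OF s\<nu>])
    also have "\<dots> = (\<Sum>i<k. (\<Sum>j<n. measure_pmf.expectation (PiW n \<nu>) (\<lambda>W. mi_sum (Nf n Pi_prot i j W))) / n)"
      unfolding sum_distrib_left[symmetric] sum_divide_distrib
      by (simp add: sum_distrib_left sum_divide_distrib)
         (intro sum.cong refl, use pos in \<open>auto simp: field_simps\<close>)
    also have "\<dots> = (\<Sum>i<k. AND_info k (rho n \<nu>) (sig n) (conv n Pi_prot) i)"
      by (intro sum.cong refl) (simp add: Rside[OF s\<nu> n])
    finally show ?thesis .
  qed
  show ?thesis
    by (intro exI[of _ "conv n Pi_prot"] exI[of _ "rho n \<nu>"] exI[of _ "sig n"])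
       (use speakers_conv sp finrho finsig c1 c2 info in auto)
qed

end
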